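(* The generator $a$ is not left invertible in $\Pi_2=\langle a,b,c\mid (ab^ic)^2=1\ (i\geq 1)\rangle$: there is no word $u\in\{a,b,c\}^\ast$ with $ua=1$ in $\Pi_2$. In particular, $a$ is not invertible in $\Pi_2$. *)

theory Defs
  imports Main
begin

datatype gen = A | B | C

definition rel_word :: "nat \<Rightarrow> gen list" where
  "rel_word i = (A # replicate i B @ [C]) @ (A # replicate i B @ [C])"

inductive pi2_step :: "gen list \<Rightarrow> gen list \<Rightarrow> bool" where
  "i \<ge> 1 \<Longrightarrow> pi2_step (x @ rel_word i @ y) (x @ y)"

definition pi2_eq :: "gen list \<Rightarrow> gen list \<Rightarrow> bool" where
  "pi2_eq = (symclp pi2_step)\<^sup>*\<^sup>*"

end

theory Submission
  imports Defs
begin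

definition comb :: "nat \<times> nat \<Rightarrow> nat \<times> nat \<Rightarrow> nat \<times> nat" where
  "comb p q = (fst p + (fst q - snd p), snd q + (snd p - fst q))"

fun gv :: "gen \<Rightarrow> nat \<times> nat" where
  "gv A = (0,1)" | "gv B = (0,0)" | "gv C = (1,0)"

fun fw :: "gen list \<Rightarrow> nat \<times> nat" where
  "fw [] = (0,0)" | "fw (g#w) = comb (gv g) (fw w)"

lemma comb_assoc: "comb (comb p q) r = comb p (comb q r)"
  by (cases p; cases q; cases r) (auto simp add: comb_def split: nat_diff_split)

lemma comb_unit[simp]: "comb (0,0) p = p" "comb p (0,0) = p"
  by (cases p, simp add: comb_def)+

lemma fw_append: "fw (x @ y) = comb (fw x) (fw y)"
  by (induction x) (simp_all add: comb_assoc)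

lemma fw_rep: "fw (replicate i B) = (0,0)"
  by (induction i) simp_all

lemma fw_rel: "fw (rel_word i) = (0,0)"
  by (simp add: rel_word_def fw_append fw_rep comb_def)

lemma step_inv: "pi2_step x y \<Longrightarrow> fw x = fw y"
  by (induction rule: pi2_step.induct) (simp add: fw_append fw_rel)

lemma eq_inv: "pi2_eq x y \<Longrightarrow> fw x = fw y"
  unfolding pi2_eq_def
proof (induction rule: rtranclp_induct)
  case base then show ?case by simp
next
  case (step y z) then show ?case
    by (auto simp: symclp_def dest: step_inv)
qed

theorem mainTheorem5:
  shows "\<not> (\<exists>u. pi2_eq (u @ [A]) [])"
proof
  assume "\<exists>u. pi2_eq (u @ [A]) []"
  then obtain u where "pi2_eq (u @ [A]) []" by blast
  then have "fw (u @ [A]) = (0,0)" using eq_inv by fastforce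
  then show False by (simp add: fw_append comb_def)
qed

end
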